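(* Let $\mathcal D\subset\mathbb R^3$ be a polyhedral cone with edges $E_i=\{tp_i:t\ge0\}$, $i=1,\dots,N_0$, and $\hat E=\bigcup_iE_i$. (i) For any $i\in\{1,\dots,N_0\}$ and all $x\in\mathcal D$, $d(x,E_i)\le\big|x-|x|p_i\big|\le2\,d(x,E_i)$. (ii) Let $\alpha_1,\dots,\alpha_{N_0}\in\mathbb R$. There exists $N=N(\mathcal D,\alpha_1,\dots,\alpha_{N_0})>0$ such that for any $x\in\mathcal D$, $r>0$ and $k$ with $d(x,\hat E)=d(x,E_k)$, $$N^{-1}\Big(\frac{d(x,E_k)\wedge r}{|x|\wedge r}\Big)^{\alpha_k}\le\prod_{i=1}^{N_0}\Big(\frac{d(x,E_i)\wedge r}{|x|\wedge r}\Big)^{\alpha_i}\le N\Big(\frac{d(x,E_k)\wedge r}{|x|\wedge r}\Big)^{\alpha_k}.$$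
   Context: Polyhedral cone: $\mathcal M\subset\mathbb S^2$ is a connected open subset of the unit sphere whose boundary has $N_0\ge3$ vertices $p_1,\dots,p_{N_0}$ and whose sides are arcs of great circles; $\mathcal D=\{x\in\mathbb R^3\setminus\{\mathbf 0\}:x/|x|\in\mathcal M\}$. (The paper additionally assumes that near each $p_i$, $\mathcal D$ coincides locally with a translated wedge $\{(\rho\cos\theta,\rho\sin\theta):\rho>0,0<\theta<\kappa_i\}\times\mathbb R$ up to rotation, $\kappa_i\in(0,2\pi)\setminus\{\pi\}$, and near other boundary points of $\mathcal M$ locally with a half ball.) *)

theory Defs
  imports "HOL-Analysis.Analysis"
begin

abbreviation S2 :: "(real^3) set" where "S2 \<equiv> sphere 0 1"

definition great_arc :: "real^3 \<Rightarrow> real^3 \<Rightarrow> (real^3) set \<Rightarrow> bool" where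
  "great_arc p q A \<longleftrightarrow> (\<exists>u \<theta>. norm u = 1 \<and> u \<bullet> p = 0 \<and> 0 < \<theta> \<and> \<theta> < 2 * pi \<and>
      A = (\<lambda>t. cos t *\<^sub>R p + sin t *\<^sub>R u) ` {0..\<theta>} \<and>
      q = cos \<theta> *\<^sub>R p + sin \<theta> *\<^sub>R u)"

definition cone_over :: "(real^3) set \<Rightarrow> (real^3) set" where
  "cone_over M = {x. x \<noteq> 0 \<and> (1 / norm x) *\<^sub>R x \<in> M}"

definition wedge :: "real \<Rightarrow> (real^3) set" where
  "wedge \<kappa> = {y. \<exists>\<rho> \<theta> z. \<rho> > 0 \<and> 0 < \<theta> \<and> \<theta> < \<kappa> \<and>
                    y = vector [\<rho> * cos \<theta>, \<rho> * sin \<theta>, z]}"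

definition ray :: "real^3 \<Rightarrow> (real^3) set" where
  "ray p = {t *\<^sub>R p | t. t \<ge> 0}"

text \<open>Polyhedral cone data: M is a connected open subset of the unit sphere whose
  (relative) boundary is the closed spherical polygon with consecutive vertices
  p 1, ..., p N0 (indices cyclic), sides being great-circle arcs; near each vertex the
  cone is locally a rotated translated wedge of opening kappa \<noteq> pi, and near the
  other boundary points locally a half ball.\<close>
definition polyhedral_cone :: "nat \<Rightarrow> (nat \<Rightarrow> real^3) \<Rightarrow> (real^3) set \<Rightarrow> bool" where
  "polyhedral_cone N0 p M \<longleftrightarrow>
     3 \<le> N0 \<and> M \<subseteq> S2 \<and> openin (top_of_set S2) M \<and> connected M \<and> M \<noteq> {} \<and>
     inj_on p {1..N0} \<and> (\<forall>i\<in>{1..N0}. p i \<in> S2) \<and>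
     (\<exists>A. (\<forall>i\<in>{1..N0}. great_arc (p i) (p (i mod N0 + 1)) (A i)) \<and>
          closure M - M = (\<Union>i\<in>{1..N0}. A i)) \<and>
     (\<forall>i\<in>{1..N0}. \<exists>\<epsilon>>0. \<exists>R \<kappa>. orthogonal_transformation R \<and> 0 < \<kappa> \<and> \<kappa> < 2 * pi \<and>
          \<kappa> \<noteq> pi \<and>
          cone_over M \<inter> ball (p i) \<epsilon> = ball (p i) \<epsilon> \<inter> (\<lambda>y. p i + R y) ` wedge \<kappa>) \<and>
     (\<forall>q\<in>closure (cone_over M) - cone_over M - {0} - (\<Union>i\<in>{1..N0}. ray (p i)).
          \<exists>\<epsilon>>0. \<exists>n. n \<noteq> 0 \<and>
          cone_over M \<inter> ball q \<epsilon> = {y \<in> ball q \<epsilon>. n \<bullet> (y - q) > 0})"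

end

theory Submission imports Defs begin

lemma ray_mem: "t \<ge> 0 \<Longrightarrow> t *\<^sub>R p \<in> ray p"
  unfolding ray_def by blast

lemma ray_ne: "ray p \<noteq> {}" using ray_mem[of 0 p] by blast

lemma part1:
  fixes x p :: "real^3"
  assumes "norm p = 1"
  shows "infdist x (ray p) \<le> norm (x - norm x *\<^sub>R p) \<and>
         norm (x - norm x *\<^sub>R p) \<le> 2 * infdist x (ray p)"
proof
  show "infdist x (ray p) \<le> norm (x - norm x *\<^sub>R p)"
    using infdist_le[OF ray_mem[of "norm x" p], of x] by (simp add: dist_norm)
  have "norm (x - norm x *\<^sub>R p) / 2 \<le> infdist x (ray p)"
    unfolding infdist_notempty[OF ray_ne]
  proof (rule cINF_greatest[OF ray_ne])
    fix a assume "a \<in> ray p"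
    then obtain t where t: "t \<ge> 0" "a = t *\<^sub>R p" unfolding ray_def by blast
    have "norm (x - norm x *\<^sub>R p) \<le> norm (x - t *\<^sub>R p) + norm (t *\<^sub>R p - norm x *\<^sub>R p)"
      using norm_diff_triangle_le by blast
    also have "norm (t *\<^sub>R p - norm x *\<^sub>R p) = \<bar>t - norm x\<bar>"
      using assms by (metis mult.right_neutral norm_scaleR scaleR_diff_left)
    also have "\<bar>t - norm x\<bar> = \<bar>norm (t *\<^sub>R p) - norm x\<bar>" using assms t by simp
    also have "\<dots> \<le> norm (x - t *\<^sub>R p)"
      by (metis norm_minus_commute norm_triangle_ineq3)
    finally show "norm (x - norm x *\<^sub>R p) / 2 \<le> dist x a" using t by (simp add: dist_norm)
  qed
  then show "norm (x - norm x *\<^sub>R p) \<le> 2 * infdist x (ray p)" by simp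
qed

lemma factor_bounds:
  fixes c d nx r :: real
  assumes "0 < c" "c \<le> 1" "c * nx \<le> d" "d \<le> nx" "0 < nx" "0 < r"
  shows "c \<le> min d r / min nx r \<and> min d r / min nx r \<le> 1"
proof -
  have m: "0 < min nx r" using assms by simp
  have "c * min nx r \<le> min d r"
    using assms by (auto simp: min_def mult_left_mono) (smt (verit) mult_le_cancel_left1 mult_left_mono)+
  moreover have "min d r \<le> min nx r" using assms by auto
  ultimately show ?thesis using m by (simp add: field_simps)
qed

lemma pow_le1: "(0::real) < f \<Longrightarrow> f \<le> 1 \<Longrightarrow> 0 \<le> a \<Longrightarrow> f powr a \<le> 1"
  by (metis less_eq_real_def powr_mono2 powr_one_eq_one)

lemma powr_bounds:
  fixes c f a :: real
  assumes "0 < c" "c \<le> f" "f \<le> 1"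
  shows "c powr \<bar>a\<bar> \<le> f powr a \<and> f powr a \<le> 1 / c powr \<bar>a\<bar>"
proof (cases "a \<ge> 0")
  case True
  have "c powr a \<le> f powr a" using assms True by (simp add: powr_mono2)
  moreover have "f powr a \<le> 1" using assms True by (intro pow_le1) auto
  moreover have "c powr a \<le> 1" using assms True by (intro pow_le1) auto
  moreover have "0 < c powr a" using assms by simp
  moreover have "c powr a * f powr a \<le> 1 * 1"
    using calculation by (intro mult_mono) auto
  ultimately show ?thesis using True assms by (simp add: field_simps)
next
  case False
  have f0: "0 < f" using assms by simp
  have "f powr (-a) \<le> 1" using assms False by (intro pow_le1) auto
  moreover have "c powr (-a) \<le> f powr (-a)" using assms False by (simp add: powr_mono2)
  moreover have "c powr (-a) \<le> 1" using assms False by (intro pow_le1) auto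
  ultimately have h: "1 \<le> f powr a" "f powr a \<le> c powr a" "1 \<le> c powr a"
    using False assms f0 by (simp_all add: powr_minus field_simps)
  have "1 * 1 \<le> c powr a * f powr a" using h by (intro mult_mono) auto
  then show ?thesis using False assms h by (simp add: powr_minus field_simps)
qed

theorem lemma3p1:
  fixes N0 :: nat and p :: "nat \<Rightarrow> real^3" and M :: "(real^3) set"
  assumes "polyhedral_cone N0 p M"
  shows "(\<forall>i\<in>{1..N0}. \<forall>x\<in>cone_over M.
            infdist x (ray (p i)) \<le> norm (x - norm x *\<^sub>R p i) \<and>
            norm (x - norm x *\<^sub>R p i) \<le> 2 * infdist x (ray (p i))) \<and>
         (\<forall>\<alpha> :: nat \<Rightarrow> real. \<exists>N>0. \<forall>x\<in>cone_over M. \<forall>r>0. \<forall>k\<in>{1..N0}.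
            infdist x (\<Union>i\<in>{1..N0}. ray (p i)) = infdist x (ray (p k)) \<longrightarrow>
              (1 / N) * (min (infdist x (ray (p k))) r / min (norm x) r) powr \<alpha> k
                \<le> (\<Prod>i\<in>{1..N0}. (min (infdist x (ray (p i))) r / min (norm x) r) powr \<alpha> i) \<and>
              (\<Prod>i\<in>{1..N0}. (min (infdist x (ray (p i))) r / min (norm x) r) powr \<alpha> i)
                \<le> N * (min (infdist x (ray (p k))) r / min (norm x) r) powr \<alpha> k)"
proof -
  have N03: "3 \<le> N0" and inj: "inj_on p {1..N0}" and unit: "\<And>i. i \<in> {1..N0} \<Longrightarrow> norm (p i) = 1"
    using assms unfolding polyhedral_cone_def by auto
  have P1: "\<And>i x. i \<in> {1..N0} \<Longrightarrow> infdist x (ray (p i)) \<le> norm (x - norm x *\<^sub>R p i) \<and>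
            norm (x - norm x *\<^sub>R p i) \<le> 2 * infdist x (ray (p i))"
    using part1 unit by blast
  define D where "D = (\<lambda>(i,j). norm (p i - p j)) ` {(i,j). i \<in> {1..N0} \<and> j \<in> {1..N0} \<and> i \<noteq> j}"
  have finD: "finite D" unfolding D_def
    by (rule finite_imageI, rule finite_subset[of _ "{1..N0} \<times> {1..N0}"]) auto
  have neD: "D \<noteq> {}" 
  proof -
    have "(1::nat,2::nat) \<in> {(i,j). i \<in> {1..N0} \<and> j \<in> {1..N0} \<and> i \<noteq> j}" using N03 by auto
    then show ?thesis unfolding D_def by (simp only: image_is_empty) blast
  qed
  have Dpos: "\<forall>d\<in>D. 0 < d"
  proof
    fix d assume "d \<in> D"
    then obtain i j where ij: "i \<in> {1..N0}" "j \<in> {1..N0}" "i \<noteq> j" "d = norm (p i - p j)"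
      unfolding D_def by auto
    then have "p i \<noteq> p j" using inj by (meson inj_onD)
    then show "0 < d" using ij by simp
  qed
  define \<delta> where "\<delta> = Min D"
  have \<delta>pos: "0 < \<delta>" unfolding \<delta>_def using finD neD Dpos by simp
  have \<delta>le: "\<delta> \<le> norm (p i - p j)" if "i \<in> {1..N0}" "j \<in> {1..N0}" "i \<noteq> j" for i j
  proof -
    have "norm (p i - p j) \<in> D" unfolding D_def using that by force
    then show ?thesis unfolding \<delta>_def using finD by simp
  qed
  define c where "c = min (\<delta>/4) 1"
  have c0: "0 < c" "c \<le> 1" "4 * c \<le> \<delta>" unfolding c_def using \<delta>pos by auto
  have sep: "c * norm x \<le> infdist x (ray (p i))"
    if "x \<noteq> 0" "i \<in> {1..N0}" "k \<in> {1..N0}" "i \<noteq> k"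
       "infdist x (ray (p k)) \<le> infdist x (ray (p i))" for x i k
  proof (rule ccontr)
    assume "\<not> ?thesis"
    then have lt: "infdist x (ray (p i)) < c * norm x" by simp
    have "norm x * norm (p i - p k) = norm (norm x *\<^sub>R p i - norm x *\<^sub>R p k)"
      by (simp add: scaleR_diff_right[symmetric])
    also have "\<dots> \<le> norm (x - norm x *\<^sub>R p i) + norm (x - norm x *\<^sub>R p k)"
      by (metis norm_diff_triangle_le norm_minus_commute order_refl)
    also have "\<dots> \<le> 2 * infdist x (ray (p i)) + 2 * infdist x (ray (p k))"
      using P1[OF that(2), of x] P1[OF that(3), of x] by linarith
    also have "\<dots> < 4 * c * norm x" using lt that(5) by linarith
    also have "\<dots> \<le> \<delta> * norm x" using c0 by (simp add: mult_right_mono)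
    also have "\<dots> \<le> norm (p i - p k) * norm x" using \<delta>le[OF that(2,3,4)] by (simp add: mult_right_mono)
    finally show False by (simp add: mult.commute)
  qed
  have part2: "\<exists>N>0. \<forall>x\<in>cone_over M. \<forall>r>0. \<forall>k\<in>{1..N0}.
            infdist x (\<Union>i\<in>{1..N0}. ray (p i)) = infdist x (ray (p k)) \<longrightarrow>
              (1 / N) * (min (infdist x (ray (p k))) r / min (norm x) r) powr \<alpha> k
                \<le> (\<Prod>i\<in>{1..N0}. (min (infdist x (ray (p i))) r / min (norm x) r) powr \<alpha> i) \<and>
              (\<Prod>i\<in>{1..N0}. (min (infdist x (ray (p i))) r / min (norm x) r) powr \<alpha> i)
                \<le> N * (min (infdist x (ray (p k))) r / min (norm x) r) powr \<alpha> k" for \<alpha> :: "nat \<Rightarrow> real"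
  proof -
    define L where "L = (\<Prod>i\<in>{1..N0}. c powr \<bar>\<alpha> i\<bar>)"
    have L0: "0 < L" unfolding L_def using c0 by (intro prod_pos) auto
    have cle1: "c powr \<bar>\<alpha> i\<bar> \<le> 1" for i using c0 by (intro pow_le1) auto
    show ?thesis
    proof (intro exI[of _ "1/L"] conjI ballI allI impI)
      show "0 < 1 / L" using L0 by simp
      fix x :: "real^3" and r :: real and k :: nat
      assume x: "x \<in> cone_over M" and r: "0 < r" and k: "k \<in> {1..N0}"
        and eq: "infdist x (\<Union>i\<in>{1..N0}. ray (p i)) = infdist x (ray (p k))"
      have x0: "x \<noteq> 0" using x unfolding cone_over_def by auto
      define f where "f i = min (infdist x (ray (p i))) r / min (norm x) r" for i
      have dk: "infdist x (ray (p k)) \<le> infdist x (ray (p i))" if "i \<in> {1..N0}" for i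
      proof -
        have "ray (p i) \<subseteq> (\<Union>i\<in>{1..N0}. ray (p i))" using that by blast
        then show ?thesis using eq infdist_mono[of "ray (p i)" "\<Union>i\<in>{1..N0}. ray (p i)" x] ray_ne by auto
      qed
      have dle: "infdist x (ray (p i)) \<le> norm x" for i
        using infdist_le[OF ray_mem[of 0 "p i"], of x] by simp
      have fb: "c \<le> f i \<and> f i \<le> 1" if "i \<in> {1..N0} - {k}" for i
        unfolding f_def using factor_bounds[OF c0(1,2) sep[OF x0 _ k _ dk] dle, of i] that x0 r by auto
      have pb: "c powr \<bar>\<alpha> i\<bar> \<le> f i powr \<alpha> i \<and> f i powr \<alpha> i \<le> 1 / c powr \<bar>\<alpha> i\<bar>"
        if "i \<in> {1..N0} - {k}" for i
        using powr_bounds[OF c0(1), of "f i" "\<alpha> i"] fb[OF that] by auto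
      define Q where "Q = (\<Prod>i\<in>{1..N0} - {k}. f i powr \<alpha> i)"
      define R where "R = (\<Prod>i\<in>{1..N0} - {k}. c powr \<bar>\<alpha> i\<bar>)"
      have R0: "0 < R" unfolding R_def using c0 by (intro prod_pos) auto
      have LR: "L = c powr \<bar>\<alpha> k\<bar> * R" unfolding L_def R_def using k by (simp add: prod.remove)
      have LleR: "L \<le> R" unfolding LR using cle1[of k] R0 by (simp add: mult_left_le_one_le)
      have QgeR: "R \<le> Q" unfolding R_def Q_def
        by (rule prod_mono) (use pb c0 in auto)
      have Qle: "Q \<le> (\<Prod>i\<in>{1..N0} - {k}. 1 / c powr \<bar>\<alpha> i\<bar>)" unfolding Q_def
        by (rule prod_mono) (use pb in auto)
      also have "\<dots> = 1 / R" unfolding R_def by (simp add: prod_dividef)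
      also have "\<dots> \<le> 1 / L" using L0 LleR by (simp add: frac_le)
      finally have QL: "Q \<le> 1 / L" .
      have QL2: "L \<le> Q" using LleR QgeR by simp
      have F0: "0 \<le> f k powr \<alpha> k" by simp
      have prodeq: "(\<Prod>i\<in>{1..N0}. f i powr \<alpha> i) = f k powr \<alpha> k * Q"
        unfolding Q_def using k by (simp add: prod.remove)
      have a: "L * f k powr \<alpha> k \<le> Q * f k powr \<alpha> k" using QL2 F0 by (rule mult_right_mono)
      have b: "Q * f k powr \<alpha> k \<le> (1 / L) * f k powr \<alpha> k" using QL F0 by (rule mult_right_mono)
      show "(1 / (1 / L)) * (min (infdist x (ray (p k))) r / min (norm x) r) powr \<alpha> k
                \<le> (\<Prod>i\<in>{1..N0}. (min (infdist x (ray (p i))) r / min (norm x) r) powr \<alpha> i)"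
        using a prodeq unfolding f_def by (simp add: mult.commute)
      show "(\<Prod>i\<in>{1..N0}. (min (infdist x (ray (p i))) r / min (norm x) r) powr \<alpha> i)
                \<le> (1 / L) * (min (infdist x (ray (p k))) r / min (norm x) r) powr \<alpha> k"
        using b prodeq unfolding f_def by (simp add: mult.commute)
    qed
  qed
  show ?thesis using P1 part2 by blast
qed

end
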